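(* $\delta^3-2d^2\delta^3-3d\delta^2+4d^3=0$.
   Context: Let $0<\kappa<1$. Let $F(\tfrac16,\tfrac56;\tfrac12;\cdot)$ denote the Gauss hypergeometric function. Define $u$ as a function of $\phi$ near $0$ by $u=\int_0^{\sin\phi}F(\tfrac16,\tfrac56;\tfrac12;\kappa^2t^2)\,\frac{dt}{\sqrt{1-t^2}}$; near the origin (fixing $0$) this inverts to a holomorphic function $u\mapsto\phi(u)$ with $\phi(0)=0$. Let $\psi$ be the holomorphic function near $0$ with $\psi(0)=0$ and $\sin\psi=\kappa\sin\phi$. Set $d=\cos\psi$ and $\delta=\phi'=d\phi/du$, as functions of $u$ on a small disc about $0$. *)

theory Defs
  imports "HOL-Complex_Analysis.Complex_Analysis"
begin

definition hypgeom :: "complex \<Rightarrow> complex \<Rightarrow> complex \<Rightarrow> complex \<Rightarrow> complex" where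
  "hypgeom a b c z =
     (\<Sum>n. (pochhammer a n * pochhammer b n / (pochhammer c n * fact n)) * z ^ n)"

definition u_of_phi :: "real \<Rightarrow> complex \<Rightarrow> complex" where
  "u_of_phi \<kappa> \<phi> =
     contour_integral (linepath 0 (sin \<phi>))
       (\<lambda>t. hypgeom (1/6) (5/6) (1/2) ((of_real \<kappa>)\<^sup>2 * t\<^sup>2) / csqrt (1 - t\<^sup>2))"

end

theory Submission imports Defs begin

definition hr :: "nat \<Rightarrow> real" where
  "hr n = pochhammer (1/6) n * pochhammer (5/6) n / (pochhammer (1/2) n * fact n)"

definition hc :: "nat \<Rightarrow> complex" where
  "hc n = pochhammer (1/6) n * pochhammer (5/6) n / (pochhammer (1/2) n * fact n)"

lemma poch_half_nz: "pochhammer (1/2::real) n \<noteq> 0"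
  by (auto simp: pochhammer_eq_0_iff)

lemma hc_real: "hc n = of_real (hr n)"
  by (simp add: hc_def hr_def flip: pochhammer_of_real)

lemma hr_0: "hr 0 = 1" by (simp add: hr_def)

lemma hr_Suc: "hr (Suc n) = hr n * ((1/6 + n) * (5/6 + n)) / ((1/2 + n) * (n + 1))"
  using poch_half_nz[of n]
  by (simp add: hr_def pochhammer_Suc field_simps)

lemma hr_bounds: "0 \<le> hr n \<and> hr n \<le> 1"
proof (induction n)
  case 0 then show ?case by (simp add: hr_0)
next
  case (Suc n)
  have q0: "0 \<le> ((1/6 + n) * (5/6 + n)) / ((1/2 + n) * (n + 1))"
    by simp
  have q1: "((1/6 + n) * (5/6 + n)) / ((1/2 + n) * (n + 1)) \<le> 1"
  proof -
    have "0 < (1/2 + real n) * (n + 1)" by simp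
    then show ?thesis by (simp add: field_simps algebra_simps)
  qed
  have "hr (Suc n) = hr n * (((1/6 + n) * (5/6 + n)) / ((1/2 + n) * (n + 1)))"
    by (simp add: hr_Suc)
  with Suc q0 q1 show ?case
    by (metis mult_le_one mult_nonneg_nonneg)
qed

lemma hc_Suc: "hc (Suc n) = hc n * ((1/6 + n) * (5/6 + n)) / ((1/2 + n) * (n + 1))"
  by (simp add: hc_real hr_Suc)

definition HA :: "complex fps" where "HA = Abs_fps hc"

lemma HA_radius: "1 \<le> fps_conv_radius HA"
  unfolding fps_conv_radius_def HA_def fps_nth_Abs_fps
proof (rule conv_radius_geI_ex')
  fix r :: real assume r: "0 < r" "ereal r < 1"
  then have r1: "r < 1" by simp
  show "summable (\<lambda>n. hc n * of_real r ^ n)"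
  proof (rule summable_comparison_test')
    show "summable (\<lambda>n. r ^ n)" using r r1 by (simp add: summable_geometric)
    fix n :: nat assume "0 \<le> n"
    have "norm (hc n * of_real r ^ n) = hr n * r ^ n"
      using hr_bounds[of n] r by (simp add: hc_real norm_mult norm_power)
    also have "\<dots> \<le> r ^ n" using hr_bounds[of n] r
      by (simp add: mult_left_le_one_le)
    finally show "norm (hc n * of_real r ^ n) \<le> r ^ n" .
  qed
qed

lemma hr_Suc': "hr (Suc n) * ((1/2 + n) * (n + 1)) = hr n * ((1/6 + n) * (5/6 + n))"
proof -
  have "(1/2 + real n) * (n + 1) > 0" by simp
  then show ?thesis by (simp add: hr_Suc)
qed

lemma hc_Suc': "hc (Suc n) * ((1/2 + of_nat n) * (of_nat n + 1)) = hc n * ((1/6 + of_nat n) * (5/6 + of_nat n))"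
  using arg_cong[OF hr_Suc'[of n], of "of_real :: real \<Rightarrow> complex"] by (simp add: hc_real)

lemma rec_aux:
  fixes x a b :: complex
  assumes "a * ((5 / 2 + x) * (3 + x)) = b * ((13 / 6 + x) * (17 / 6 + x))"
  shows "(2 + x) * ((3 + x) * a) * 36 - (1 + x) * ((2 + x) * b) * 36 + 18 * (a * (3 + x)) - 72 * ((2 + x) * b) = 5 * b"
proof -
  have "(2 + x) * ((3 + x) * a) * 36 + 18 * (a * (3 + x)) = 36 * (a * ((5 / 2 + x) * (3 + x)))"
    by (simp add: algebra_simps)
  also have "\<dots> = 36 * (b * ((13 / 6 + x) * (17 / 6 + x)))" using assms by simp
  finally have e: "(2 + x) * ((3 + x) * a) * 36 + 18 * (a * (3 + x)) = 36 * (b * ((13 / 6 + x) * (17 / 6 + x)))" .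
  have "(2 + x) * ((3 + x) * a) * 36 - (1 + x) * ((2 + x) * b) * 36 + 18 * (a * (3 + x)) - 72 * ((2 + x) * b)
     = ((2 + x) * ((3 + x) * a) * 36 + 18 * (a * (3 + x))) - (1 + x) * ((2 + x) * b) * 36 - 72 * ((2 + x) * b)"
    by (simp add: algebra_simps)
  also have "\<dots> = 5 * b" unfolding e by (simp add: algebra_simps)
  finally show ?thesis .
qed

lemma hc_0: "hc 0 = 1" by (simp add: hc_def)

lemma HA_ode_fps:
  "fps_X * fps_deriv (fps_deriv HA) - fps_X * (fps_X * fps_deriv (fps_deriv HA))
   + fps_const (1/2) * fps_deriv HA - fps_const 2 * (fps_X * fps_deriv HA)
   - fps_const (5/36) * HA = 0"
proof (rule fps_ext)
  fix n
  show "(fps_X * fps_deriv (fps_deriv HA) - fps_X * (fps_X * fps_deriv (fps_deriv HA))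
   + fps_const (1/2) * fps_deriv HA - fps_const 2 * (fps_X * fps_deriv HA)
   - fps_const (5/36) * HA) $ n = 0 $ n"
  proof (cases n)
    case 0 then show ?thesis by (simp add: HA_def hc_Suc hc_0)
  next
    case (Suc m) note m = this
    then show ?thesis
    proof (cases m)
      case 0 then show ?thesis using m by (simp add: HA_def hc_Suc hc_0 field_simps)
    next
      case (Suc k)
      show ?thesis using m Suc hc_Suc'[of "Suc (Suc k)"] apply (simp add: HA_def)
        by (rule rec_aux)
    qed
  qed
qed

lemma rad_X: "1 \<le> fps_conv_radius (F::complex fps) \<Longrightarrow> 1 \<le> fps_conv_radius (fps_X * F)"
  using fps_conv_radius_mult[of fps_X F] by simp

lemma rad_c: "1 \<le> fps_conv_radius (F::complex fps) \<Longrightarrow> 1 \<le> fps_conv_radius (fps_const c * F)"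
  using fps_conv_radius_mult[of "fps_const c" F] by simp

lemma ev_X: "norm (z::complex) < fps_conv_radius F \<Longrightarrow> eval_fps (fps_X * F) z = z * eval_fps F z"
  by (subst eval_fps_mult) auto

lemma ev_c: "norm (z::complex) < fps_conv_radius F \<Longrightarrow> eval_fps (fps_const c * F) z = c * eval_fps F z"
  by (subst eval_fps_mult) auto

definition h0 where "h0 = eval_fps HA"
definition h1 where "h1 = eval_fps (fps_deriv HA)"
definition h2 where "h2 = eval_fps (fps_deriv (fps_deriv HA))"

lemma rad1: "1 \<le> fps_conv_radius (fps_deriv HA)"
  using HA_radius fps_conv_radius_deriv order.trans by blast
lemma rad2: "1 \<le> fps_conv_radius (fps_deriv (fps_deriv HA))"
  using rad1 fps_conv_radius_deriv order.trans by blast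

lemma h_ode:
  assumes "norm z < 1"
  shows "z * (1 - z) * h2 z + (1/2 - 2 * z) * h1 z - 5/36 * h0 z = 0"
proof -
  let ?D2 = "fps_deriv (fps_deriv HA)" and ?D1 = "fps_deriv HA"
  have lt: "norm z < fps_conv_radius F" if "1 \<le> fps_conv_radius F" for F :: "complex fps"
    using assms that by (metis ereal_less(3) less_le_trans one_ereal_def)
  note r = HA_radius rad1 rad2 rad_X[OF rad1] rad_X[OF rad2] rad_X[OF rad_X[OF rad2]] rad_c[OF rad1]
     rad_c[OF rad_X[OF rad1]] rad_c[OF HA_radius]
  note rr = r[THEN lt]
  have a1: "1 \<le> fps_conv_radius (fps_X * ?D2 - fps_X * (fps_X * ?D2))"
    by (rule order.trans[OF _ fps_conv_radius_diff]) (simp add: r)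
  have a2: "1 \<le> fps_conv_radius (fps_X * ?D2 - fps_X * (fps_X * ?D2) + fps_const (1/2) * ?D1)"
    by (rule order.trans[OF _ fps_conv_radius_add]) (simp add: r a1)
  have a3: "1 \<le> fps_conv_radius (fps_X * ?D2 - fps_X * (fps_X * ?D2) + fps_const (1/2) * ?D1 - fps_const 2 * (fps_X * ?D1))"
    by (rule order.trans[OF _ fps_conv_radius_diff]) (simp add: r a2)
  have "0 = eval_fps (fps_X * ?D2 - fps_X * (fps_X * ?D2)
   + fps_const (1/2) * ?D1 - fps_const 2 * (fps_X * ?D1)
   - fps_const (5/36) * HA) z" by (simp add: HA_ode_fps)
  also have "\<dots> = z * h2 z - z * (z * h2 z) + 1/2 * h1 z - 2 * (z * h1 z) - 5/36 * h0 z"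
    by (simp add: eval_fps_diff eval_fps_add rr a1[THEN lt] a2[THEN lt] a3[THEN lt] ev_X ev_c h0_def h1_def h2_def)
  finally show ?thesis by (simp add: algebra_simps)
qed

lemma lt1: "norm (z::complex) < 1 \<Longrightarrow> 1 \<le> fps_conv_radius F \<Longrightarrow> norm z < fps_conv_radius F"
  by (metis ereal_less(3) less_le_trans one_ereal_def)

lemma h0_deriv: "norm z < 1 \<Longrightarrow> (h0 has_field_derivative h1 z) (at z)"
  unfolding h0_def h1_def by (rule has_field_derivative_eval_fps) (rule lt1[OF _ HA_radius])

lemma h1_deriv: "norm z < 1 \<Longrightarrow> (h1 has_field_derivative h2 z) (at z)"
  unfolding h2_def h1_def by (rule has_field_derivative_eval_fps) (rule lt1[OF _ rad1])

lemma h0_at_0: "h0 0 = 1"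
  by (simp add: h0_def eval_fps_at_0 HA_def hc_0)

lemma closed_form:
  assumes "0 < e" and sm: "\<And>w::complex. w \<in> ball 0 e \<Longrightarrow> norm (sin w ^ 2) < 1"
    and w: "(w::complex) \<in> ball 0 e"
  shows "cos w * h0 (sin w ^ 2) = cos (2/3 * w)"
proof -
  define G where "G w = cos w * h0 (sin w ^ 2)" for w
  define G1 where "G1 w = - sin w * h0 (sin w ^ 2) + 2 * sin w * cos w ^ 2 * h1 (sin w ^ 2)" for w
  have ds: "((\<lambda>w. sin w ^ 2) has_field_derivative 2 * sin w * cos w) (at w)" for w :: complex
    by (auto intro!: derivative_eq_intros)
  have dh0: "((\<lambda>w. h0 (sin w ^ 2)) has_field_derivative D) (at w)"
    if "w \<in> ball 0 e" "D = h1 (sin w ^ 2) * (2 * sin w * cos w)" for w :: complex and D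
    unfolding that(2) by (rule DERIV_chain2[OF h0_deriv[OF sm[OF that(1)]] ds])
  have dh1: "((\<lambda>w. h1 (sin w ^ 2)) has_field_derivative D) (at w)"
    if "w \<in> ball 0 e" "D = h2 (sin w ^ 2) * (2 * sin w * cos w)" for w :: complex and D
    unfolding that(2) by (rule DERIV_chain2[OF h1_deriv[OF sm[OF that(1)]] ds])
  have dG: "(G has_field_derivative G1 w) (at w)" if "w \<in> ball 0 e" for w
    unfolding G_def[abs_def] G1_def
    by (rule derivative_eq_intros dh0[OF that] refl | simp)+ (simp add: algebra_simps power2_eq_square)
  have dG1: "(G1 has_field_derivative (-(4/9) * G w)) (at w)" if "w \<in> ball 0 e" for w
  proof -
    have ode: "sin w ^ 2 * (1 - sin w ^ 2) * h2 (sin w ^ 2) + (1/2 - 2 * sin w ^ 2) * h1 (sin w ^ 2) - 5/36 * h0 (sin w ^ 2) = 0"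
      by (rule h_ode[OF sm[OF that]])
    have pyth: "sin w ^ 2 + cos w ^ 2 = 1" by (rule sin_cos_squared_add)
    show ?thesis
      unfolding G_def G1_def[abs_def]
      apply (rule derivative_eq_intros dh0[OF that] dh1[OF that] refl | simp)+
      using ode pyth by algebra
  qed
  define a where "a w = G w * cos (2/3 * w) - G1 w * sin (2/3 * w) * (3/2)" for w
  define b where "b w = G w * sin (2/3 * w) + G1 w * cos (2/3 * w) * (3/2)" for w
  have dcw: "((\<lambda>w. cos (2/3 * w)) has_field_derivative (- sin (2/3 * w) * (2/3))) (at w)" for w :: complex
    using DERIV_chain2[OF DERIV_cos DERIV_cmult_Id[of "2/3" w]] by (simp add: algebra_simps)
  have dsw: "((\<lambda>w. sin (2/3 * w)) has_field_derivative (cos (2/3 * w) * (2/3))) (at w)" for w :: complex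
    using DERIV_chain2[OF DERIV_sin DERIV_cmult_Id[of "2/3" w]] by (simp add: algebra_simps)
  have da: "(a has_field_derivative 0) (at w within ball 0 e)" if "w \<in> ball 0 e" for w
  proof -
    have d: "(a has_field_derivative (G1 w * cos (2/3 * w) + (- sin (2/3 * w) * (2/3)) * G w
          - ((-(4/9) * G w) * sin (2/3 * w) + (cos (2/3 * w) * (2/3)) * G1 w) * (3/2))) (at w)"
      unfolding a_def[abs_def]
      by (intro DERIV_diff DERIV_mult dG[OF that] dG1[OF that] dcw dsw DERIV_cmult_right)
    have e: "(G1 w * cos (2/3 * w) + (- sin (2/3 * w) * (2/3)) * G w
          - ((-(4/9) * G w) * sin (2/3 * w) + (cos (2/3 * w) * (2/3)) * G1 w) * (3/2)) = 0"
      by (simp add: algebra_simps)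
    show ?thesis using d unfolding e by (rule has_field_derivative_at_within)
  qed
  have db: "(b has_field_derivative 0) (at w within ball 0 e)" if "w \<in> ball 0 e" for w
  proof -
    have d: "(b has_field_derivative (G1 w * sin (2/3 * w) + (cos (2/3 * w) * (2/3)) * G w
          + ((-(4/9) * G w) * cos (2/3 * w) + (- sin (2/3 * w) * (2/3)) * G1 w) * (3/2))) (at w)"
      unfolding b_def[abs_def]
      by (intro DERIV_add DERIV_mult dG[OF that] dG1[OF that] dcw dsw DERIV_cmult_right)
    have e: "(G1 w * sin (2/3 * w) + (cos (2/3 * w) * (2/3)) * G w
          + ((-(4/9) * G w) * cos (2/3 * w) + (- sin (2/3 * w) * (2/3)) * G1 w) * (3/2)) = 0"
      by (simp add: algebra_simps)
    show ?thesis using d unfolding e by (rule has_field_derivative_at_within)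
  qed
  obtain ca where ca: "\<forall>x\<in>ball 0 e. a x = ca"
    using has_field_derivative_zero_constant[OF convex_ball da] by blast
  obtain cb where cb: "\<forall>x\<in>ball 0 e. b x = cb"
    using has_field_derivative_zero_constant[OF convex_ball db] by blast
  have 0: "0 \<in> ball (0::complex) e" using assms by simp
  have "a 0 = 1" by (simp add: a_def G_def h0_at_0)
  then have ca1: "ca = 1" using ca 0 by auto
  have "b 0 = 0" by (simp add: b_def G1_def)
  then have cb0: "cb = 0" using cb 0 by auto
  have "G w = a w * cos (2/3 * w) + b w * sin (2/3 * w)"
    unfolding a_def b_def using sin_cos_squared_add[of "2/3 * w"] by algebra
  also have "\<dots> = cos (2/3 * w)" using ca cb ca1 cb0 w by simp
  finally show ?thesis by (simp add: G_def)
qed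

lemma final_alg:
  fixes d H c \<delta> :: complex
  assumes "H * \<delta> = 1" "d * H = c" "4 * c ^ 3 - 3 * c = 2 * d ^ 2 - 1"
  shows "\<delta>^3 - 2 * d^2 * \<delta>^3 - 3 * d * \<delta>^2 + 4 * d^3 = 0"
proof -
  have e1: "d * \<delta>^2 = (d*H)*\<delta>^3"
  proof -
    have "(d*H)*\<delta>^3 = d*\<delta>^2*(H*\<delta>)" by (simp add: algebra_simps power3_eq_cube power2_eq_square)
    then show ?thesis unfolding assms(1) power_one mult_1_right by (rule sym)
  qed
  have e2: "d^3 = (d*H)^3*\<delta>^3"
  proof -
    have "(d*H)^3*\<delta>^3 = d^3*(H*\<delta>)^3" by (simp add: power_mult_distrib)
    then show ?thesis unfolding assms(1) power_one mult_1_right by (rule sym)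
  qed
  have "\<delta>^3 - 2 * d^2 * \<delta>^3 - 3 * d * \<delta>^2 + 4 * d^3 = \<delta>^3 * (1 - 2*d^2) - 3 * (d * \<delta>^2) + 4 * d^3"
    by (simp add: algebra_simps)
  also have "\<dots> = \<delta>^3 * (1 - 2*d^2) - 3 * ((d*H)*\<delta>^3) + 4 * ((d*H)^3*\<delta>^3)"
    using e1 e2 by simp
  also have "\<dots> = \<delta>^3 * ((1 - 2*d^2) - (3 * c - 4 * c^3))" using assms(2) by (simp add: algebra_simps)
  also have "\<dots> = 0" using assms(3) by (simp add: algebra_simps)
  finally show ?thesis .
qed

theorem theorem2:
  fixes \<kappa> :: real and r :: real and \<phi> \<psi> :: "complex \<Rightarrow> complex"
  assumes "0 < \<kappa>" and "\<kappa> < 1"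
    and "0 < r"
    and "\<phi> holomorphic_on ball 0 r" and "\<phi> 0 = 0"
    and "\<And>u. u \<in> ball 0 r \<Longrightarrow> u_of_phi \<kappa> (\<phi> u) = u"
    and "\<psi> holomorphic_on ball 0 r" and "\<psi> 0 = 0"
    and "\<And>u. u \<in> ball 0 r \<Longrightarrow> sin (\<psi> u) = of_real \<kappa> * sin (\<phi> u)"
  shows "\<forall>\<^sub>F u in nhds 0.
           (let d = cos (\<psi> u); \<delta> = deriv \<phi> u
            in \<delta>^3 - 2 * d^2 * \<delta>^3 - 3 * d * \<delta>^2 + 4 * d^3 = 0)"
proof -
  define g where "g t = h0 ((of_real \<kappa>)\<^sup>2 * t\<^sup>2) / csqrt (1 - t\<^sup>2)" for t :: complex
  have hyp: "hypgeom (1/6) (5/6) (1/2) z = h0 z" for z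
    by (simp add: hypgeom_def h0_def eval_fps_def HA_def hc_def)
  have uphi: "u_of_phi \<kappa> p = contour_integral (linepath 0 (sin p)) g" for p
    by (simp add: u_of_phi_def g_def[abs_def] hyp)
  have h0holo: "h0 holomorphic_on ball 0 1"
    using h0_deriv by (auto simp: holomorphic_on_open intro!: exI)
  have nt: "norm (t^2) < 1" if "t \<in> ball 0 1" for t :: complex
    using that by (simp add: norm_power power_less_one_iff)
  have notneg: "1 - t^2 \<notin> \<real>\<^sub>\<le>\<^sub>0" if "t \<in> ball 0 1" for t :: complex
  proof -
    have "Re (t^2) < 1" using nt[OF that] complex_Re_le_cmod[of "t^2"] by linarith
    then show ?thesis by (simp add: complex_nonpos_Reals_iff)
  qed
  have kt: "(of_real \<kappa>)\<^sup>2 * t\<^sup>2 \<in> ball (0::complex) 1" if t: "t \<in> ball 0 1" for t :: complex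
  proof -
        have "norm ((of_real \<kappa>)\<^sup>2 * t\<^sup>2) = \<kappa>^2 * norm (t^2)"
          by (simp add: norm_mult norm_power)
        also have "\<dots> < 1"
        proof -
          have "\<kappa>^2 \<le> 1" using assms(1,2) by (simp add: power_le_one)
          then show ?thesis using nt[OF t] assms(1)
            by (metis less_le_trans mult_left_le_one_le norm_ge_zero mult_strict_left_mono mult.right_neutral zero_less_power)
        qed
        finally have X: "(of_real \<kappa>)\<^sup>2 * t\<^sup>2 \<in> ball (0::complex) 1" by simp
    then show ?thesis .
  qed
  have c1: "(\<lambda>t. h0 ((of_real \<kappa>)\<^sup>2 * t\<^sup>2)) holomorphic_on ball 0 1"
  proof -
    have "(h0 \<circ> (\<lambda>t. (of_real \<kappa>)\<^sup>2 * t\<^sup>2)) holomorphic_on ball 0 1"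
    proof (rule holomorphic_on_compose_gen[OF _ h0holo])
      show "(\<lambda>t::complex. (of_real \<kappa>)\<^sup>2 * t\<^sup>2) holomorphic_on ball 0 1" by (intro holomorphic_intros)
      show "(\<lambda>t::complex. (of_real \<kappa>)\<^sup>2 * t\<^sup>2) ` ball 0 1 \<subseteq> ball 0 1"
        using kt by blast
    qed
    then show ?thesis by (simp add: o_def)
  qed
  have c2: "(\<lambda>t. csqrt (1 - t\<^sup>2)) holomorphic_on ball 0 1"
    by (intro holomorphic_intros notneg)
  have gholo: "g holomorphic_on ball 0 1"
    unfolding g_def[abs_def]
  proof (rule holomorphic_on_divide[OF c1 c2])
    fix t :: complex assume "t \<in> ball 0 1"
    from notneg[OF this] show "csqrt (1 - t\<^sup>2) \<noteq> 0" by auto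
  qed
  obtain \<Phi> where \<Phi>: "\<And>x. x \<in> ball 0 1 \<Longrightarrow> (\<Phi> has_field_derivative g x) (at x within ball 0 1)"
    using holomorphic_convex_primitive'[OF convex_ball open_ball gholo] by blast
  have \<Phi>at: "(\<Phi> has_field_derivative g x) (at x)" if "x \<in> ball 0 1" for x
    using \<Phi>[OF that] at_within_open[OF that open_ball] by metis
  have ci: "contour_integral (linepath 0 w) g = \<Phi> w - \<Phi> 0" if "w \<in> ball 0 1" for w
  proof -
    have "closed_segment 0 w \<subseteq> ball 0 1"
      using convex_contains_segment[of "ball (0::complex) 1"] that by auto
    then have "(g has_contour_integral (\<Phi> (pathfinish (linepath 0 w)) - \<Phi> (pathstart (linepath 0 w)))) (linepath 0 w)"
      by (intro contour_integral_primitive[OF \<Phi>]) auto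
    then show ?thesis using contour_integral_unique by auto
  qed
  have "open {w::complex. norm (sin w ^ 2) < 1}"
    by (rule open_Collect_less) (intro continuous_on_norm continuous_on_power continuous_on_sin continuous_on_id continuous_on_const)+
  moreover have "(0::complex) \<in> {w::complex. norm (sin w ^ 2) < 1}" by simp
  ultimately obtain e where e: "e > 0" "ball 0 e \<subseteq> {w::complex. norm (sin w ^ 2) < 1}"
    by (rule openE)
  have sm: "norm (sin w ^ 2) < 1" if "w \<in> ball 0 e" for w :: complex using e that by blast
  have contphi: "continuous_on (ball 0 r) \<phi>" using assms(4) holomorphic_on_imp_continuous_on by blast
  have contpsi: "continuous_on (ball 0 r) \<psi>" using assms(7) holomorphic_on_imp_continuous_on by blast
  define S where "S = (ball 0 r \<inter> (\<lambda>u. sin (\<phi> u)) -` ball 0 1) \<inter> (ball 0 r \<inter> (\<lambda>u. cos (\<phi> u)) -` {z. 0 < Re z})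
     \<inter> (ball 0 r \<inter> \<psi> -` ball 0 e)"
  have oRe: "open {z::complex. 0 < Re z}"
    by (rule open_Collect_less) (intro continuous_on_Re continuous_on_id continuous_on_const)+
  have o1: "open (ball 0 r \<inter> (\<lambda>u. sin (\<phi> u)) -` ball 0 1)"
    by (rule continuous_open_preimage) (auto intro: continuous_on_sin[OF contphi])
  have o2: "open (ball 0 r \<inter> (\<lambda>u. cos (\<phi> u)) -` {z. 0 < Re z})"
    by (rule continuous_open_preimage) (auto intro: continuous_on_cos[OF contphi] oRe)
  have o3: "open (ball 0 r \<inter> \<psi> -` ball 0 e)"
    by (rule continuous_open_preimage) (auto intro!: contpsi)
  have openS: "open S"
    unfolding S_def using o1 o2 o3 by (metis open_Int)
  have S0: "0 \<in> S" using assms(3,5,8) e(1) by (simp add: S_def)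
  have eqS: "\<Phi> (sin (\<phi> x)) - \<Phi> 0 = x" if "x \<in> S" for x
  proof -
    have "x \<in> ball 0 r" "sin (\<phi> x) \<in> ball 0 1" using that by (auto simp: S_def)
    then show ?thesis using assms(6)[of x] uphi ci by simp
  qed
  have main: "deriv \<phi> u ^3 - 2 * cos (\<psi> u)^2 * deriv \<phi> u^3 - 3 * cos (\<psi> u) * deriv \<phi> u^2 + 4 * cos (\<psi> u)^3 = 0"
    if u: "u \<in> S" for u
  proof -
    have ur: "u \<in> ball 0 r" and us: "sin (\<phi> u) \<in> ball 0 1" and uc: "0 < Re (cos (\<phi> u))"
      and ue: "\<psi> u \<in> ball 0 e"
      using u by (auto simp: S_def)
    have phider: "(\<phi> has_field_derivative deriv \<phi> u) (at u)"
      by (rule holomorphic_derivI[OF assms(4) open_ball ur])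
    have comp: "((\<lambda>u. \<Phi> (sin (\<phi> u)) - \<Phi> 0) has_field_derivative g (sin (\<phi> u)) * (cos (\<phi> u) * deriv \<phi> u)) (at u)"
      using DERIV_diff[OF DERIV_chain2[OF \<Phi>at[OF us] DERIV_chain2[OF DERIV_sin phider]] DERIV_const[of "\<Phi> 0"]]
      by simp
    have "((\<lambda>x. x) has_field_derivative g (sin (\<phi> u)) * (cos (\<phi> u) * deriv \<phi> u)) (at u)"
      by (rule has_field_derivative_transform_within_open[OF comp openS u eqS])
    then have one: "g (sin (\<phi> u)) * (cos (\<phi> u) * deriv \<phi> u) = 1"
      using DERIV_ident DERIV_unique by blast
    have cs: "csqrt (1 - (sin (\<phi> u))^2) = cos (\<phi> u)"
      using csqrt_square[of "cos (\<phi> u)"] uc by (simp add: cos_squared_eq)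
    have cnz: "cos (\<phi> u) \<noteq> 0" using uc by auto
    have sq: "(of_real \<kappa>)^2 * (sin (\<phi> u))^2 = sin (\<psi> u) ^ 2"
      using assms(9)[OF ur] by (simp add: power_mult_distrib)
    have H: "h0 (sin (\<psi> u) ^ 2) * deriv \<phi> u = 1"
      using one cnz unfolding g_def cs sq by (simp add: field_simps)
    have cf: "cos (\<psi> u) * h0 (sin (\<psi> u) ^ 2) = cos (2/3 * \<psi> u)"
      by (rule closed_form[OF e(1) sm ue])
    have tr: "4 * cos (2/3 * \<psi> u) ^ 3 - 3 * cos (2/3 * \<psi> u) = 2 * cos (\<psi> u) ^ 2 - 1"
    proof -
      have "cos (3 * (2/3 * \<psi> u)) = cos (2 * \<psi> u)" by simp
      then show ?thesis by (simp only: cos_treble_cos cos_double_cos)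
    qed
    show ?thesis by (rule final_alg[OF H cf tr])
  qed
  show ?thesis
    unfolding eventually_nhds Let_def using openS S0 main by blast
qed

end
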